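(* For $n>2$, the polytope $P(D_n)$ has a regular triangulation all of whose maximal simplices are unimodular with respect to the affine lattice spanned by the vertices of $P(D_n)$.
   Context: Each $g\in S_n$ is identified with its $n\times n$ permutation matrix (entry $(i,j)$ is $1$ iff $g(i)=j$); $P(G)=\mathrm{conv}\{g:g\in G\}$. $D_n\le S_n$ is generated by $r=(1\ 2\ \cdots\ n)$ and $f=(1\ n)(2\ n-1)\cdots(\lfloor\frac{n+1}{2}\rfloor\ \lceil\frac{n+1}{2}\rceil)$. A simplex with vertices $w_1,\dots,w_m$ in an affine lattice $L$ is unimodular in $L$ if $\{w_m-w_1,\dots,w_2-w_1\}$ is a basis of (the linear lattice underlying) $L$. *)

theory Defs
  imports "HOL-Analysis.Analysis"
begin

(* Permutations of {1..n} are functions nat => nat that are the identity outside {1..n}. *)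

definition dn_rot :: "nat \<Rightarrow> nat \<Rightarrow> nat" where
  "dn_rot n i = (if 1 \<le> i \<and> i < n then i + 1 else if i = n then 1 else i)"

definition dn_flip :: "nat \<Rightarrow> nat \<Rightarrow> nat" where
  "dn_flip n i = (if 1 \<le> i \<and> i \<le> n then n + 1 - i else i)"

(* D_n: the subgroup of S_n generated by r and f (finite group, so the
   generated submonoid equals the generated subgroup) *)
inductive_set dihedral :: "nat \<Rightarrow> (nat \<Rightarrow> nat) set" for n :: nat where
  dihedral_id: "id \<in> dihedral n"
| dihedral_rot: "g \<in> dihedral n \<Longrightarrow> dn_rot n \<circ> g \<in> dihedral n"
| dihedral_flip: "g \<in> dihedral n \<Longrightarrow> dn_flip n \<circ> g \<in> dihedral n"

(* Permutation matrix of g, with rows/columns indexed by the finite type 'n,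
   identified with {1..n} via the bijection e :: nat => 'n.
   Entry (i,j) is 1 iff g(i) = j. *)
definition perm_mat :: "(nat \<Rightarrow> 'n::finite) \<Rightarrow> (nat \<Rightarrow> nat) \<Rightarrow> real ^ 'n ^ 'n" where
  "perm_mat e g = (\<chi> a b. if g (inv_into {1..CARD('n)} e a) = inv_into {1..CARD('n)} e b
                           then 1 else 0)"

definition dn_vertices :: "(nat \<Rightarrow> 'n::finite) \<Rightarrow> (real ^ 'n ^ 'n) set" where
  "dn_vertices e = perm_mat e ` dihedral CARD('n)"

definition aff_lattice :: "'a::real_vector set \<Rightarrow> 'a set" where
  "aff_lattice V = {(\<Sum>v\<in>V. c v *\<^sub>R v) | c. (\<forall>v\<in>V. c v \<in> \<int>) \<and> (\<Sum>v\<in>V. c v) = 1}"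

definition lin_part :: "'a::real_vector set \<Rightarrow> 'a set" where
  "lin_part L = {x - y | x y. x \<in> L \<and> y \<in> L}"

definition is_Z_basis :: "'a::real_vector set \<Rightarrow> 'a set \<Rightarrow> bool" where
  "is_Z_basis B M \<longleftrightarrow> finite B \<and>
     M = {(\<Sum>b\<in>B. c b *\<^sub>R b) | c. \<forall>b\<in>B. c b \<in> \<int>} \<and>
     (\<forall>c. (\<forall>b\<in>B. c b \<in> \<int>) \<and> (\<Sum>b\<in>B. c b *\<^sub>R b) = 0 \<longrightarrow> (\<forall>b\<in>B. c b = 0))"

definition unimodular_in :: "'a::real_vector set \<Rightarrow> 'a set \<Rightarrow> bool" where
  "unimodular_in L S \<longleftrightarrow> finite S \<and> S \<subseteq> L \<and>
     (\<exists>w\<in>S. is_Z_basis ((\<lambda>v. v - w) ` (S - {w})) (lin_part L))"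

(* T is a regular triangulation of conv V (with vertices in V), given by its
   maximal (full-dimensional) simplices, each represented by its vertex set *)
definition regular_triangulation :: "'a::euclidean_space set \<Rightarrow> 'a set set \<Rightarrow> bool" where
  "regular_triangulation V T \<longleftrightarrow>
     finite T \<and>
     (\<forall>S\<in>T. S \<subseteq> V \<and> \<not> affine_dependent S \<and>
              aff_dim (convex hull S) = aff_dim (convex hull V)) \<and>
     \<Union>((\<lambda>S. convex hull S) ` T) = convex hull V \<and>
     (\<forall>S\<in>T. \<forall>S'\<in>T. convex hull S \<inter> convex hull S' = convex hull (S \<inter> S')) \<and>
     (\<exists>\<omega> :: 'a \<Rightarrow> real. \<forall>S\<in>T. \<exists>a b. (\<forall>v\<in>S. a \<bullet> v + b = \<omega> v) \<and>
                                     (\<forall>v\<in>V - S. a \<bullet> v + b < \<omega> v))"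

end

theory Submission
  imports Defs
begin


definition zspan :: "'a::real_vector set \<Rightarrow> 'a set" where
  "zspan X = {(\<Sum>b\<in>X. c b *\<^sub>R b) | c. \<forall>b\<in>X. c b \<in> \<int>}"

lemma zspan_0: "0 \<in> zspan X"
  unfolding zspan_def by (auto intro!: exI[of _ "\<lambda>_. 0"])

lemma zspan_add: "x \<in> zspan X \<Longrightarrow> y \<in> zspan X \<Longrightarrow> x + y \<in> zspan X"
  unfolding zspan_def
proof (clarify)
  fix c d :: "'a \<Rightarrow> real" assume c: "\<forall>b\<in>X. c b \<in> \<int>" and d: "\<forall>b\<in>X. d b \<in> \<int>"
  show "\<exists>e. (\<Sum>b\<in>X. c b *\<^sub>R b) + (\<Sum>b\<in>X. d b *\<^sub>R b) = (\<Sum>b\<in>X. e b *\<^sub>R b) \<and> (\<forall>b\<in>X. e b \<in> \<int>)"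
    by (rule exI[of _ "\<lambda>b. c b + d b"]) (simp add: c d scaleR_add_left sum.distrib)
qed

lemma zspan_scale: "t \<in> \<int> \<Longrightarrow> x \<in> zspan X \<Longrightarrow> t *\<^sub>R x \<in> zspan X"
  unfolding zspan_def
proof (clarify)
  fix c :: "'a \<Rightarrow> real" assume t: "t \<in> \<int>" and c: "\<forall>b\<in>X. c b \<in> \<int>"
  show "\<exists>e. t *\<^sub>R (\<Sum>b\<in>X. c b *\<^sub>R b) = (\<Sum>b\<in>X. e b *\<^sub>R b) \<and> (\<forall>b\<in>X. e b \<in> \<int>)"
    by (rule exI[of _ "\<lambda>b. t * c b"]) (simp add: t c scaleR_sum_right)
qed

lemma zspan_diff: "x \<in> zspan X \<Longrightarrow> y \<in> zspan X \<Longrightarrow> x - y \<in> zspan X"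
  using zspan_add[of x X "(-1) *\<^sub>R y"] zspan_scale[of "-1" y X] by simp

lemma sum_ind: fixes b :: "'a::real_vector" shows "finite X \<Longrightarrow> b \<in> X \<Longrightarrow> (\<Sum>x\<in>X. (if x = b then 1 else 0) *\<^sub>R x) = b"
proof -
  assume "finite X" "b \<in> X"
  have "(\<Sum>x\<in>X. (if x = b then 1 else 0) *\<^sub>R x) = (\<Sum>x\<in>X. if x = b then x else 0)"
    by (rule sum.cong) auto
  also have "\<dots> = b" using \<open>finite X\<close> \<open>b \<in> X\<close> by (simp add: sum.delta)
  finally show ?thesis .
qed

lemma zspan_mem: "finite X \<Longrightarrow> b \<in> X \<Longrightarrow> b \<in> zspan X"
  unfolding zspan_def
  apply (rule CollectI, rule exI[of _ "\<lambda>b'. if b' = b then 1 else 0"])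
  apply (simp add: sum_ind)
  done

lemma zspan_sum: "finite J \<Longrightarrow> (\<forall>j\<in>J. t j \<in> \<int> \<and> f j \<in> zspan X) \<Longrightarrow> (\<Sum>j\<in>J. t j *\<^sub>R f j) \<in> zspan X"
  by (induction J rule: finite_induct) (auto intro!: zspan_add zspan_scale zspan_0)

lemma aff_mem: "finite V \<Longrightarrow> v \<in> V \<Longrightarrow> v \<in> aff_lattice V"
  unfolding aff_lattice_def
  apply (rule CollectI, rule exI[of _ "\<lambda>b'. if b' = v then 1 else 0"])
  apply (simp add: sum_ind sum.delta)
  done

lemma aff_comb:
  assumes "x \<in> aff_lattice V" "y \<in> aff_lattice V" "z \<in> aff_lattice V" "t \<in> \<int>"
  shows "x + t *\<^sub>R (y - z) \<in> aff_lattice V"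
proof -
  obtain cx where cx: "x = (\<Sum>v\<in>V. cx v *\<^sub>R v)" "\<forall>v\<in>V. cx v \<in> \<int>" "(\<Sum>v\<in>V. cx v) = 1"
    using assms(1) unfolding aff_lattice_def by blast
  obtain cy where cy: "y = (\<Sum>v\<in>V. cy v *\<^sub>R v)" "\<forall>v\<in>V. cy v \<in> \<int>" "(\<Sum>v\<in>V. cy v) = 1"
    using assms(2) unfolding aff_lattice_def by blast
  obtain cz where cz: "z = (\<Sum>v\<in>V. cz v *\<^sub>R v)" "\<forall>v\<in>V. cz v \<in> \<int>" "(\<Sum>v\<in>V. cz v) = 1"
    using assms(3) unfolding aff_lattice_def by blast
  let ?d = "\<lambda>v. cx v + t * (cy v - cz v)"
  have h1: "x + t *\<^sub>R (y - z) = (\<Sum>v\<in>V. ?d v *\<^sub>R v)"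
    by (simp add: cx(1) cy(1) cz(1) scaleR_add_left sum.distrib scaleR_diff_left sum_subtractf
        scaleR_sum_right scaleR_diff_right right_diff_distrib)
  have h2: "(\<Sum>v\<in>V. ?d v) = 1"
    by (simp add: sum.distrib cx(3) cy(3) cz(3) sum_subtractf flip: sum_distrib_left)
  have h3: "\<forall>v\<in>V. ?d v \<in> \<int>" using cx cy cz assms(4) by auto
  show ?thesis unfolding aff_lattice_def using h1 h2 h3 by (intro CollectI exI[of _ ?d]) auto
qed

lemma aff_comb_sum:
  assumes "finite J" "w \<in> aff_lattice V" "\<forall>j\<in>J. v j \<in> aff_lattice V \<and> t j \<in> \<int>"
  shows "w + (\<Sum>j\<in>J. t j *\<^sub>R (v j - w)) \<in> aff_lattice V"
  using assms
proof (induction J rule: finite_induct)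
  case empty then show ?case by simp
next
  case (insert j J)
  have "w + (\<Sum>j\<in>insert j J. t j *\<^sub>R (v j - w)) = (w + (\<Sum>j\<in>J. t j *\<^sub>R (v j - w))) + t j *\<^sub>R (v j - w)"
    using insert by (simp add: algebra_simps)
  also have "\<dots> \<in> aff_lattice V" using insert by (intro aff_comb) auto
  finally show ?case .
qed

lemma linear_inner_rep:
  fixes h :: "'a::euclidean_space \<Rightarrow> real"
  assumes "linear h"
  shows "h x = (\<Sum>b\<in>Basis. h b *\<^sub>R b) \<bullet> x"
proof -
  have "h x = h (\<Sum>b\<in>Basis. (x \<bullet> b) *\<^sub>R b)" by (simp add: euclidean_representation)
  also have "\<dots> = (\<Sum>b\<in>Basis. (x \<bullet> b) * h b)"
    using assms by (simp add: linear_sum linear_scale)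
  also have "\<dots> = (\<Sum>b\<in>Basis. h b *\<^sub>R b) \<bullet> x"
    by (simp add: inner_sum_left) (simp add: inner_commute mult.commute)
  finally show ?thesis .
qed




lemma ext_sum: fixes W :: "'a::real_vector set" shows "finite W \<Longrightarrow> X \<subseteq> W \<Longrightarrow> (\<Sum>v\<in>W. (if v \<in> X then u v else 0) *\<^sub>R v) = (\<Sum>v\<in>X. u v *\<^sub>R v)"
  by (rule sum.mono_neutral_cong_right) auto

lemma sum_ind_card: "finite S \<Longrightarrow> X \<subseteq> S \<Longrightarrow> (\<Sum>v\<in>S. if v \<in> X then 1 else 0 :: real) = real (card X)"
  using sum.inter_restrict[of S "\<lambda>_. 1::real" X] by (simp add: Int_absorb1)

locale dsetup =
  fixes V :: "'a::euclidean_space set" and I :: "'i set" and A B :: "'i \<Rightarrow> 'a set"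
  assumes finV: "finite V" and finI: "finite I" and Ine: "I \<noteq> {}"
  and Vdef: "V = (\<Union>i\<in>I. A i \<union> B i)"
  and disjAB: "\<And>i j. i\<in>I \<Longrightarrow> j\<in>I \<Longrightarrow> A i \<inter> B j = {}"
  and disjAA: "\<And>i j. i\<in>I \<Longrightarrow> j\<in>I \<Longrightarrow> i \<noteq> j \<Longrightarrow> A i \<inter> A j = {}"
  and disjBB: "\<And>i j. i\<in>I \<Longrightarrow> j\<in>I \<Longrightarrow> i \<noteq> j \<Longrightarrow> B i \<inter> B j = {}"
  and cardAB: "\<And>i. i\<in>I \<Longrightarrow> card (A i) = card (B i)"
  and Ane: "\<And>i. i\<in>I \<Longrightarrow> A i \<noteq> {}"
  and sumAB: "\<And>i. i\<in>I \<Longrightarrow> (\<Sum>v\<in>A i. v) = (\<Sum>v\<in>B i. v)"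
  and rel: "\<And>c i a b. (\<Sum>v\<in>V. c v *\<^sub>R v) = 0 \<Longrightarrow> i\<in>I \<Longrightarrow> a\<in>A i \<Longrightarrow> b \<in> B i \<Longrightarrow> c b = - c a"
begin

lemma AsubV: "i \<in> I \<Longrightarrow> A i \<subseteq> V" and BsubV: "i \<in> I \<Longrightarrow> B i \<subseteq> V"
  using Vdef by blast+

lemma finA: "i \<in> I \<Longrightarrow> finite (A i)" and finB: "i \<in> I \<Longrightarrow> finite (B i)"
  using finite_subset[OF AsubV finV] finite_subset[OF BsubV finV] by blast+

lemma Bne: assumes "i \<in> I" shows "B i \<noteq> {}"
proof
  assume "B i = {}"
  then have "card (A i) = 0" using cardAB[OF assms] by simp
  then show False using finA[OF assms] Ane[OF assms] by simp
qed

lemma Vcases: "v \<in> V \<Longrightarrow> (\<And>i. i \<in> I \<Longrightarrow> v \<in> A i \<Longrightarrow> P) \<Longrightarrow> (\<And>i. i \<in> I \<Longrightarrow> v \<in> B i \<Longrightarrow> P) \<Longrightarrow> P"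
  using Vdef by blast

lemma relA: "(\<Sum>v\<in>V. c v *\<^sub>R v) = 0 \<Longrightarrow> i\<in>I \<Longrightarrow> a\<in>A i \<Longrightarrow> a' \<in> A i \<Longrightarrow> c a = c a'"
proof -
  assume h: "(\<Sum>v\<in>V. c v *\<^sub>R v) = 0" "i\<in>I" "a\<in>A i" "a' \<in> A i"
  obtain b where "b \<in> B i" using Bne h(2) by blast
  then show ?thesis using rel[OF h(1) h(2) h(3)] rel[OF h(1) h(2) h(4)] by simp
qed

definition adm :: "('i \<Rightarrow> 'a) \<Rightarrow> bool" where "adm g \<longleftrightarrow> (\<forall>i\<in>I. g i \<in> A i)"
definition Sof :: "('i \<Rightarrow> 'a) \<Rightarrow> 'a set" where "Sof g = V - g ` I"

lemma S_sub: "Sof g \<subseteq> V" unfolding Sof_def by auto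
lemma finS: "finite (Sof g)" using finite_subset[OF S_sub finV] .

lemma B_sub_S: assumes "adm g" "i \<in> I" shows "B i \<subseteq> Sof g"
proof
  fix b assume b: "b \<in> B i"
  have "b \<notin> g ` I"
  proof
    assume "b \<in> g ` I"
    then obtain j where j: "j \<in> I" "b = g j" by blast
    then have "b \<in> A j" using assms(1) unfolding adm_def by simp
    then show False using disjAB[OF j(1) assms(2)] b by blast
  qed
  then show "b \<in> Sof g" unfolding Sof_def using BsubV[OF assms(2)] b by blast
qed

lemma A_sub_S: assumes "adm g" "i \<in> I" shows "A i - {g i} \<subseteq> Sof g"
proof
  fix b assume b: "b \<in> A i - {g i}"
  have "b \<notin> g ` I"
  proof
    assume "b \<in> g ` I"
    then obtain j where j: "j \<in> I" "b = g j" by blast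
    then have "b \<in> A j" using assms(1) unfolding adm_def by simp
    moreover have "j \<noteq> i" using j b by blast
    ultimately show False using disjAA[OF j(1) assms(2)] b by blast
  qed
  then show "b \<in> Sof g" unfolding Sof_def using AsubV[OF assms(2)] b by blast
qed

lemma g_notin: "i \<in> I \<Longrightarrow> g i \<notin> Sof g"
  unfolding Sof_def by auto

lemma key_eq: "adm g \<Longrightarrow> i \<in> I \<Longrightarrow> g i = (\<Sum>v\<in>B i. v) - (\<Sum>v\<in>A i - {g i}. v)"
  using sum.remove[OF finA, of i "g i" "\<lambda>v. v"] sumAB unfolding adm_def by (simp add: algebra_simps)

lemma cardA1: assumes "i \<in> I" "a \<in> A i" shows "real (card (A i - {a})) = real (card (B i)) - 1"
proof -
  have c: "card (A i - {a}) = card (A i) - 1" using card_Diff_singleton[OF assms(2)] .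
  have "card (A i) \<noteq> 0" using finA[OF assms(1)] assms(2) by auto
  then have "real (card (A i) - 1) = real (card (A i)) - 1" by (simp add: of_nat_diff)
  then show ?thesis unfolding c cardAB[OF assms(1)] by simp
qed

lemma indep: "adm g \<Longrightarrow> \<not> dependent (Sof g)"
proof
  assume adm: "adm g" and "dependent (Sof g)"
  then obtain u v0 where v0: "v0 \<in> Sof g" "u v0 \<noteq> 0" and s: "(\<Sum>v\<in>Sof g. u v *\<^sub>R v) = 0"
    using dependent_finite[OF finS] by blast
  define c where "c v = (if v \<in> Sof g then u v else 0)" for v
  have s0: "(\<Sum>v\<in>V. c v *\<^sub>R v) = 0"
    unfolding c_def using ext_sum[OF finV S_sub] s by simp
  have cg: "c (g i) = 0" if "i \<in> I" for i using g_notin[OF that] c_def by simp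
  have "v0 \<in> V" using v0 S_sub by blast
  then have "c v0 = 0"
  proof (rule Vcases)
    fix i assume "i \<in> I" "v0 \<in> A i"
    then show "c v0 = 0" using relA[OF s0 \<open>i\<in>I\<close> \<open>v0 \<in> A i\<close>, of "g i"] adm cg unfolding adm_def by auto
  next
    fix i assume "i \<in> I" "v0 \<in> B i"
    then show "c v0 = 0" using rel[OF s0 \<open>i\<in>I\<close>, of "g i" v0] adm cg unfolding adm_def by auto
  qed
  then show False using v0 c_def by simp
qed

lemma affindep: "adm g \<Longrightarrow> \<not> affine_dependent (Sof g)"
  using indep affine_dependent_imp_dependent by blast

lemma gi_aff: assumes "adm g" "i \<in> I" shows "g i \<in> affine hull (Sof g)"
proof -
  let ?S = "Sof g"
  define u where "u v = (if v \<in> B i then 1 else 0) - (if v \<in> A i - {g i} then 1 else (0::real))" for v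
  have BS: "B i \<subseteq> ?S" and AS: "A i - {g i} \<subseteq> ?S" using B_sub_S A_sub_S assms by auto
  have "sum u ?S = card (B i) - real (card (A i - {g i}))"
    unfolding u_def sum_subtractf sum_ind_card[OF finS BS] sum_ind_card[OF finS AS] ..
  also have "\<dots> = 1" using cardA1[of i "g i"] assms unfolding adm_def by simp
  finally have s1: "sum u ?S = 1" .
  have "(\<Sum>v\<in>?S. u v *\<^sub>R v) = (\<Sum>v\<in>?S. (if v \<in> B i then 1 else 0) *\<^sub>R v) - (\<Sum>v\<in>?S. (if v \<in> A i - {g i} then 1 else 0) *\<^sub>R v)"
    unfolding u_def by (simp add: scaleR_diff_left sum_subtractf)
  also have "\<dots> = (\<Sum>v\<in>B i. v) - (\<Sum>v\<in>A i - {g i}. v)"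
    using ext_sum[OF finS BS, of "\<lambda>_. 1"] ext_sum[OF finS AS, of "\<lambda>_. 1"] by simp
  also have "\<dots> = g i" using key_eq assms by simp
  finally show ?thesis using s1 affine_hull_finite[OF finS] by blast
qed

lemma aff_eq: assumes "adm g" shows "affine hull (Sof g) = affine hull V"
proof
  show "affine hull Sof g \<subseteq> affine hull V" by (rule hull_mono[OF S_sub])
  have "V \<subseteq> affine hull Sof g"
  proof
    fix v assume "v \<in> V"
    show "v \<in> affine hull Sof g"
    proof (cases "v \<in> Sof g")
      case True then show ?thesis by (rule hull_inc)
    next
      case False then obtain i where "i \<in> I" "v = g i" using \<open>v \<in> V\<close> unfolding Sof_def by auto
      then show ?thesis using gi_aff assms by simp
    qed
  qed
  then show "affine hull V \<subseteq> affine hull Sof g"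
    by (rule hull_minimal) (rule affine_affine_hull)
qed


lemma cover: assumes "x \<in> convex hull V" shows "\<exists>g. adm g \<and> x \<in> convex hull (Sof g)"
proof -
  obtain u where u: "\<forall>v\<in>V. 0 \<le> u v" "sum u V = 1" "(\<Sum>v\<in>V. u v *\<^sub>R v) = x"
    using assms convex_hull_finite[OF finV] by blast
  have "\<forall>i\<in>I. \<exists>a\<in>A i. \<forall>a'\<in>A i. u a \<le> u a'"
  proof
    fix i assume i: "i \<in> I"
    have fin: "finite (u ` A i)" and ne: "u ` A i \<noteq> {}" using finA[OF i] Ane[OF i] by auto
    obtain a where a: "a \<in> A i" "u a = Min (u ` A i)" using Min_in[OF fin ne] by auto
    have "\<forall>a'\<in>A i. u a \<le> u a'" using a(2) Min_le[OF fin] by auto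
    then show "\<exists>a\<in>A i. \<forall>a'\<in>A i. u a \<le> u a'" using a(1) by blast
  qed
  then obtain g where g: "\<forall>i\<in>I. g i \<in> A i \<and> (\<forall>a'\<in>A i. u (g i) \<le> u a')" by metis
  have adm: "adm g" using g adm_def by blast
  define \<delta> where "\<delta> i v = (if v \<in> A i then 1 else 0) - (if v \<in> B i then 1 else (0::real))" for i v
  define u' where "u' v = u v - (\<Sum>i\<in>I. u (g i) * \<delta> i v)" for v
  have dA: "(\<Sum>i\<in>I. u (g i) * \<delta> i v) = u (g j)" if j: "j \<in> I" "v \<in> A j" for j v
  proof -
    have "(\<Sum>i\<in>I. u (g i) * \<delta> i v) = u (g j) * \<delta> j v + (\<Sum>i\<in>I-{j}. u (g i) * \<delta> i v)"
      using sum.remove[OF finI j(1)] .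
    moreover have "\<delta> j v = 1" using disjAB[OF j(1) j(1)] j(2) \<delta>_def by auto
    moreover have "\<delta> i v = 0" if "i \<in> I - {j}" for i
      using disjAB[of j i] disjAA[of i j] j that \<delta>_def by auto
    ultimately show ?thesis by simp
  qed
  have dB: "(\<Sum>i\<in>I. u (g i) * \<delta> i v) = - u (g j)" if j: "j \<in> I" "v \<in> B j" for j v
  proof -
    have "(\<Sum>i\<in>I. u (g i) * \<delta> i v) = u (g j) * \<delta> j v + (\<Sum>i\<in>I-{j}. u (g i) * \<delta> i v)"
      using sum.remove[OF finI j(1)] .
    moreover have "\<delta> j v = -1" using disjAB[OF j(1) j(1)] j(2) \<delta>_def by auto
    moreover have "\<delta> i v = 0" if "i \<in> I - {j}" for i
      using disjAB[of i j] disjBB[of i j] j that \<delta>_def by auto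
    ultimately show ?thesis by simp
  qed
  have ug: "0 \<le> u (g j)" if "j \<in> I" for j using g that AsubV u(1) by blast
  have nonneg: "\<forall>v\<in>V. 0 \<le> u' v"
  proof
    fix v assume "v \<in> V"
    then show "0 \<le> u' v"
    proof (rule Vcases)
      fix j assume "j \<in> I" "v \<in> A j"
      then show ?thesis using dA g u'_def by auto
    next
      fix j assume "j \<in> I" "v \<in> B j"
      then show ?thesis using dB ug u'_def u(1) \<open>v \<in> V\<close> by auto
    qed
  qed
  have sd: "(\<Sum>v\<in>V. \<delta> i v) = 0" if i: "i \<in> I" for i
    unfolding \<delta>_def sum_subtractf sum_ind_card[OF finV AsubV[OF i]] sum_ind_card[OF finV BsubV[OF i]]
    using cardAB[OF i] by simp
  have sdv: "(\<Sum>v\<in>V. \<delta> i v *\<^sub>R v) = 0" if i: "i \<in> I" for i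
  proof -
    have "(\<Sum>v\<in>V. \<delta> i v *\<^sub>R v) = (\<Sum>v\<in>V. (if v \<in> A i then 1 else 0) *\<^sub>R v) - (\<Sum>v\<in>V. (if v \<in> B i then 1 else 0) *\<^sub>R v)"
      unfolding \<delta>_def by (simp add: scaleR_diff_left sum_subtractf)
    also have "\<dots> = (\<Sum>v\<in>A i. v) - (\<Sum>v\<in>B i. v)"
      using ext_sum[OF finV AsubV[OF i], of "\<lambda>_. 1"] ext_sum[OF finV BsubV[OF i], of "\<lambda>_. 1"] by simp
    finally show ?thesis using sumAB[OF i] by simp
  qed
  have su': "sum u' V = 1"
  proof -
    have "sum u' V = sum u V - (\<Sum>v\<in>V. \<Sum>i\<in>I. u (g i) * \<delta> i v)"
      unfolding u'_def by (simp add: sum_subtractf)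
    also have "(\<Sum>v\<in>V. \<Sum>i\<in>I. u (g i) * \<delta> i v) = (\<Sum>i\<in>I. u (g i) * (\<Sum>v\<in>V. \<delta> i v))"
      by (simp add: sum.swap[of _ V] sum_distrib_left)
    also have "\<dots> = 0" using sd by simp
    finally show ?thesis using u(2) by simp
  qed
  have xu': "(\<Sum>v\<in>V. u' v *\<^sub>R v) = x"
  proof -
    have "(\<Sum>v\<in>V. u' v *\<^sub>R v) = x - (\<Sum>v\<in>V. (\<Sum>i\<in>I. u (g i) * \<delta> i v) *\<^sub>R v)"
      unfolding u'_def using u(3) by (simp add: scaleR_diff_left sum_subtractf)
    also have "(\<Sum>v\<in>V. (\<Sum>i\<in>I. u (g i) * \<delta> i v) *\<^sub>R v) = (\<Sum>i\<in>I. u (g i) *\<^sub>R (\<Sum>v\<in>V. \<delta> i v *\<^sub>R v))"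
      by (simp add: scaleR_sum_left scaleR_sum_right sum.swap[of _ V])
    also have "\<dots> = 0" using sdv by simp
    finally show ?thesis by simp
  qed
  have u'g: "u' v = 0" if vv: "v \<in> V - Sof g" for v
  proof -
    have "v \<in> g ` I" using vv unfolding Sof_def by blast
    then obtain j where "j \<in> I" "v = g j" by blast
    then show ?thesis using dA[of j v] g u'_def by auto
  qed
  have "sum u' (Sof g) = 1"
    using sum.mono_neutral_right[OF finV S_sub[of g], of u'] u'g su' by simp
  moreover have "(\<Sum>v\<in>Sof g. u' v *\<^sub>R v) = x"
    using sum.mono_neutral_right[OF finV S_sub[of g], of "\<lambda>v. u' v *\<^sub>R v"] u'g xu' by simp
  moreover have "\<forall>v\<in>Sof g. 0 \<le> u' v" using nonneg S_sub by blast
  ultimately have "x \<in> convex hull (Sof g)" using convex_hull_finite[OF finS] by blast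
  then show ?thesis using adm by blast
qed


lemma inter: assumes "adm g" "adm g'"
  shows "convex hull (Sof g) \<inter> convex hull (Sof g') = convex hull (Sof g \<inter> Sof g')"
proof
  show "convex hull (Sof g \<inter> Sof g') \<subseteq> convex hull (Sof g) \<inter> convex hull (Sof g')"
    by (simp add: hull_mono)
  show "convex hull (Sof g) \<inter> convex hull (Sof g') \<subseteq> convex hull (Sof g \<inter> Sof g')"
  proof
    fix x assume "x \<in> convex hull (Sof g) \<inter> convex hull (Sof g')"
    then obtain u u' where u: "\<forall>v\<in>Sof g. 0 \<le> u v" "sum u (Sof g) = 1" "(\<Sum>v\<in>Sof g. u v *\<^sub>R v) = x"
      and u': "\<forall>v\<in>Sof g'. 0 \<le> u' v" "sum u' (Sof g') = 1" "(\<Sum>v\<in>Sof g'. u' v *\<^sub>R v) = x"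
      using convex_hull_finite[OF finS[of g]] convex_hull_finite[OF finS[of g']] by auto
    define U where "U v = (if v \<in> Sof g then u v else 0)" for v
    define U' where "U' v = (if v \<in> Sof g' then u' v else 0)" for v
    have sU: "(\<Sum>v\<in>V. U v *\<^sub>R v) = x" using ext_sum[OF finV S_sub[of g], of u] U_def u(3) by simp
    have sU': "(\<Sum>v\<in>V. U' v *\<^sub>R v) = x" using ext_sum[OF finV S_sub[of g'], of u'] U'_def u'(3) by simp
    define c where "c v = U v - U' v" for v
    have c0: "(\<Sum>v\<in>V. c v *\<^sub>R v) = 0"
      by (simp add: c_def scaleR_diff_left sum_subtractf sU sU')
    have Ug: "U (g i) = 0" "U' (g' i) = 0" if "i \<in> I" for i
      using g_notin[OF that] U_def U'_def by auto
    have Ug0: "U v \<ge> 0" "U' v \<ge> 0" for v using u(1) u'(1) U_def U'_def by auto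
    have cg: "c (g i) = 0" if i: "i \<in> I" for i
    proof -
      have gi: "g i \<in> A i" "g' i \<in> A i" using assms i adm_def by auto
      have "c (g i) \<le> 0" using Ug[OF i] Ug0 c_def by simp
      moreover have "c (g' i) \<ge> 0" using Ug[OF i] Ug0 c_def by simp
      moreover have "c (g i) = c (g' i)" using relA[OF c0 i gi] .
      ultimately show ?thesis by linarith
    qed
    have ceq: "c v = 0" if "v \<in> V" for v
      using that
    proof (rule Vcases)
      fix i assume i: "i \<in> I" "v \<in> A i"
      have "g i \<in> A i" using assms i adm_def by auto
      then show "c v = 0" using relA[OF c0 i(1) i(2), of "g i"] cg[OF i(1)] by simp
    next
      fix i assume i: "i \<in> I" "v \<in> B i"
      have "g i \<in> A i" using assms i adm_def by auto
      then show "c v = 0" using rel[OF c0 i(1) _ i(2), of "g i"] cg[OF i(1)] by simp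
    qed
    have UU: "U v = U' v" if "v \<in> V" for v using ceq[OF that] c_def by simp
    have Uz: "U v = 0" if vv: "v \<in> V - (Sof g \<inter> Sof g')" for v
    proof (cases "v \<in> Sof g")
      case False then show ?thesis by (simp add: U_def)
    next
      case True
      then have "v \<notin> Sof g'" using vv by blast
      then show ?thesis using UU[of v] vv U'_def by simp
    qed
    have SS: "Sof g \<inter> Sof g' \<subseteq> V" using S_sub by blast
    have fSS: "finite (Sof g \<inter> Sof g')" using finS by blast
    have "sum U V = 1" using sum.mono_neutral_cong_right[OF finV S_sub[of g], of U u] U_def u(2) by auto
    then have s1: "sum U (Sof g \<inter> Sof g') = 1"
      using sum.mono_neutral_right[OF finV SS, of U] Uz by simp
    have s2: "(\<Sum>v\<in>Sof g \<inter> Sof g'. U v *\<^sub>R v) = x"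
      using sum.mono_neutral_right[OF finV SS, of "\<lambda>v. U v *\<^sub>R v"] Uz sU by simp
    have s3: "\<forall>v\<in>Sof g \<inter> Sof g'. 0 \<le> U v" using Ug0 by simp
    show "x \<in> convex hull (Sof g \<inter> Sof g')"
      using convex_hull_finite[OF fSS] s1 s2 s3 by blast
  qed
qed

definition om :: "'a \<Rightarrow> real" where "om v = (if v \<in> (\<Union>i\<in>I. A i) then 1 else 0)"

lemma regular: assumes "adm g"
  shows "\<exists>a b. (\<forall>v\<in>Sof g. a \<bullet> v + b = om v) \<and> (\<forall>v\<in>V - Sof g. a \<bullet> v + b < om v)"
proof -
  obtain h where h: "linear h" "\<forall>x\<in>Sof g. h x = om x"
    using real_vector.linear_independent_extend[OF indep[OF assms], where f=om] by blast
  define a where "a = (\<Sum>b\<in>Basis. h b *\<^sub>R b)"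
  have ha: "h x = a \<bullet> x" for x unfolding a_def by (rule linear_inner_rep[OF h(1)])
  have "\<forall>v\<in>V - Sof g. a \<bullet> v + 0 < om v"
  proof
    fix v assume vv: "v \<in> V - Sof g"
    have "v \<in> g ` I" using vv unfolding Sof_def by blast
    then obtain i where i: "i \<in> I" "v = g i" by blast
    have BS: "B i \<subseteq> Sof g" and AS: "A i - {g i} \<subseteq> Sof g" using B_sub_S A_sub_S assms i by auto
    have e: "v = (\<Sum>w\<in>B i. w) - (\<Sum>w\<in>A i - {g i}. w)"
      using trans[OF i(2) key_eq[OF assms i(1)]] .
    have "h v = h (\<Sum>w\<in>B i. w) - h (\<Sum>w\<in>A i - {g i}. w)"
      unfolding linear_diff[OF h(1), symmetric] using arg_cong[OF e, of h] .
    also have "\<dots> = (\<Sum>w\<in>B i. h w) - (\<Sum>w\<in>A i - {g i}. h w)"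
      using linear_sum[OF h(1), of "\<lambda>w. w" "B i"] linear_sum[OF h(1), of "\<lambda>w. w" "A i - {g i}"] by simp
    also have "(\<Sum>w\<in>B i. h w) = 0"
    proof (rule sum.neutral, rule ballI)
      fix w assume w: "w \<in> B i"
      have "w \<notin> (\<Union>j\<in>I. A j)" using disjAB[OF _ i(1)] w by blast
      then show "h w = 0" using h(2) BS w om_def by auto
    qed
    also have "(\<Sum>w\<in>A i - {g i}. h w) = (\<Sum>w\<in>A i - {g i}. 1)"
    proof (rule sum.cong, simp)
      fix w assume w: "w \<in> A i - {g i}"
      then have "w \<in> (\<Union>j\<in>I. A j)" using i(1) by blast
      have "w \<in> Sof g" using AS w by blast
      then have "h w = om w" using h(2) by blast
      then show "h w = 1" using \<open>w \<in> (\<Union>j\<in>I. A j)\<close> om_def by simp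
    qed
    finally have "h v \<le> 0" by simp
    moreover have "om v = 1" using i assms adm_def om_def by auto
    ultimately show "a \<bullet> v + 0 < om v" using ha by simp
  qed
  then show ?thesis using h(2) ha by (intro exI[of _ a] exI[of _ 0]) auto
qed


lemma unimod: assumes "adm g" shows "unimodular_in (aff_lattice V) (Sof g)"
proof -
  let ?S = "Sof g" and ?L = "aff_lattice V"
  obtain i0 where i0: "i0 \<in> I" using Ine by blast
  obtain w where w: "w \<in> B i0" using Bne[OF i0] by blast
  have wS: "w \<in> ?S" using B_sub_S[OF assms i0] w by blast
  define B' where "B' = (\<lambda>v. v - w) ` (?S - {w})"
  have finB': "finite B'" using finS B'_def by simp
  have inj: "inj_on (\<lambda>v. v - w) (?S - {w})" by (rule inj_onI) simp
  have reidx: "(\<Sum>b\<in>B'. c b *\<^sub>R b) = (\<Sum>v\<in>?S - {w}. c (v - w) *\<^sub>R (v - w))" for c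
    unfolding B'_def by (simp add: sum.reindex[OF inj])
  have SL: "?S \<subseteq> ?L" using aff_mem[OF finV] S_sub by blast
  have wL: "w \<in> ?L" using SL wS by blast
  have mS: "v - w \<in> zspan B'" if "v \<in> ?S" for v
  proof (cases "v = w")
    case True then show ?thesis using zspan_0 by simp
  next
    case False then have "v - w \<in> B'" using that B'_def by blast
    then show ?thesis using zspan_mem[OF finB'] by blast
  qed
  have vw: "v - w \<in> zspan B'" if vV: "v \<in> V" for v
  proof (cases "v \<in> ?S")
    case True then show ?thesis by (rule mS)
  next
    case False
    then have "v \<in> g ` I" using vV unfolding Sof_def by blast
    then obtain i where i: "i \<in> I" "v = g i" by blast
    have BS: "B i \<subseteq> ?S" and AS: "A i - {g i} \<subseteq> ?S" using B_sub_S A_sub_S assms i by auto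
    have e1: "(\<Sum>b\<in>B i. 1 *\<^sub>R (b - w)) = (\<Sum>b\<in>B i. b) - real (card (B i)) *\<^sub>R w"
      by (simp add: sum_subtractf sum_constant_scaleR)
    have e2: "(\<Sum>b\<in>A i - {g i}. 1 *\<^sub>R (b - w)) = (\<Sum>b\<in>A i - {g i}. b) - real (card (A i - {g i})) *\<^sub>R w"
      by (simp add: sum_subtractf sum_constant_scaleR)
    have c: "real (card (A i - {g i})) = real (card (B i)) - 1"
      using cardA1[OF i(1), of "g i"] assms i(1) unfolding adm_def by simp
    have e: "v = (\<Sum>w\<in>B i. w) - (\<Sum>w\<in>A i - {g i}. w)"
      using trans[OF i(2) key_eq[OF assms i(1)]] .
    have "v - w = (\<Sum>b\<in>B i. 1 *\<^sub>R (b - w)) - (\<Sum>b\<in>A i - {g i}. 1 *\<^sub>R (b - w))"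
      unfolding e1 e2 c e by (simp add: algebra_simps)
    also have "\<dots> \<in> zspan B'"
      using BS AS mS by (intro zspan_diff zspan_sum) (auto simp: finB[OF i(1)] finA[OF i(1)])
    finally show ?thesis .
  qed
  have ZB: "lin_part ?L = zspan B'"
  proof
    show "lin_part ?L \<subseteq> zspan B'"
    proof
      fix z assume "z \<in> lin_part ?L"
      then obtain x y where xy: "z = x - y" "x \<in> ?L" "y \<in> ?L" unfolding lin_part_def by blast
      obtain cx where cx: "x = (\<Sum>v\<in>V. cx v *\<^sub>R v)" "\<forall>v\<in>V. cx v \<in> \<int>" "(\<Sum>v\<in>V. cx v) = 1"
        using xy(2) unfolding aff_lattice_def by blast
      obtain cy where cy: "y = (\<Sum>v\<in>V. cy v *\<^sub>R v)" "\<forall>v\<in>V. cy v \<in> \<int>" "(\<Sum>v\<in>V. cy v) = 1"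
        using xy(3) unfolding aff_lattice_def by blast
      have "(\<Sum>v\<in>V. (cx v - cy v) *\<^sub>R (v - w)) = (\<Sum>v\<in>V. (cx v - cy v) *\<^sub>R v) - (\<Sum>v\<in>V. (cx v - cy v) *\<^sub>R w)"
        by (simp add: scaleR_diff_right sum_subtractf)
      also have "(\<Sum>v\<in>V. (cx v - cy v) *\<^sub>R w) = (\<Sum>v\<in>V. (cx v - cy v)) *\<^sub>R w"
        by (rule scaleR_sum_left[symmetric])
      also have "(\<Sum>v\<in>V. (cx v - cy v) *\<^sub>R v) - (\<Sum>v\<in>V. (cx v - cy v)) *\<^sub>R w = z"
        unfolding xy(1) cx(1) cy(1) using cx(3) cy(3) by (simp add: scaleR_diff_left sum_subtractf)
      finally have "z = (\<Sum>v\<in>V. (cx v - cy v) *\<^sub>R (v - w))" by simp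
      also have "\<dots> \<in> zspan B'"
        using cx(2) cy(2) vw by (intro zspan_sum[OF finV]) auto
      finally show "z \<in> zspan B'" .
    qed
    show "zspan B' \<subseteq> lin_part ?L"
    proof
      fix z assume "z \<in> zspan B'"
      then obtain c where c: "z = (\<Sum>b\<in>B'. c b *\<^sub>R b)" "\<forall>b\<in>B'. c b \<in> \<int>" unfolding zspan_def by blast
      have z: "z = (\<Sum>v\<in>?S - {w}. c (v - w) *\<^sub>R (v - w))" using reidx c(1) by simp
      have "\<forall>j\<in>?S - {w}. j \<in> ?L \<and> c (j - w) \<in> \<int>"
        using SL c(2) B'_def by auto
      then have "w + (\<Sum>j\<in>?S - {w}. c (j - w) *\<^sub>R (j - w)) \<in> ?L"
        using aff_comb_sum[of "?S - {w}" w V "\<lambda>j. j" "\<lambda>j. c (j - w)"] finS wL by simp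
      then have "w + z \<in> ?L" using z by simp
      then show "z \<in> lin_part ?L" unfolding lin_part_def using wL
        by (intro CollectI exI[of _ "w + z"] exI[of _ w]) simp
    qed
  qed
  have zind: "\<forall>c. (\<forall>b\<in>B'. c b \<in> \<int>) \<and> (\<Sum>b\<in>B'. c b *\<^sub>R b) = 0 \<longrightarrow> (\<forall>b\<in>B'. c b = 0)"
  proof (intro allI impI)
    fix c assume h: "(\<forall>b\<in>B'. c b \<in> \<int>) \<and> (\<Sum>b\<in>B'. c b *\<^sub>R b) = 0"
    define u where "u v = (if v = w then - (\<Sum>v\<in>?S - {w}. c (v - w)) else c (v - w))" for v
    have "(\<Sum>v\<in>?S. u v *\<^sub>R v) = u w *\<^sub>R w + (\<Sum>v\<in>?S - {w}. u v *\<^sub>R v)"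
      using sum.remove[OF finS wS] .
    also have "(\<Sum>v\<in>?S - {w}. u v *\<^sub>R v) = (\<Sum>v\<in>?S - {w}. c (v - w) *\<^sub>R v)"
      by (rule sum.cong) (auto simp: u_def)
    also have "(\<Sum>v\<in>?S - {w}. c (v - w) *\<^sub>R v) = (\<Sum>v\<in>?S - {w}. c (v - w) *\<^sub>R (v - w)) + (\<Sum>v\<in>?S - {w}. c (v - w)) *\<^sub>R w"
      by (simp add: scaleR_diff_right sum_subtractf scaleR_sum_left)
    also have "(\<Sum>v\<in>?S - {w}. c (v - w) *\<^sub>R (v - w)) = 0" using h reidx by simp
    finally have "(\<Sum>v\<in>?S. u v *\<^sub>R v) = 0" by (simp add: u_def)
    then have u0: "\<forall>v\<in>?S. u v = 0" using indep[OF assms] dependent_finite[OF finS] by blast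
    show "\<forall>b\<in>B'. c b = 0"
    proof
      fix b assume "b \<in> B'"
      then obtain v where v: "v \<in> ?S" "v \<noteq> w" "b = v - w" unfolding B'_def by blast
      then have "u v = 0" using u0 by blast
      then show "c b = 0" using v u_def by simp
    qed
  qed
  have "is_Z_basis B' (lin_part ?L)"
    unfolding is_Z_basis_def using finB' ZB zind unfolding zspan_def by blast
  then show ?thesis unfolding unimodular_in_def B'_def using finS SL wS by blast
qed

theorem main: "\<exists>T. regular_triangulation V T \<and> (\<forall>S\<in>T. unimodular_in (aff_lattice V) S)"
proof (intro exI conjI)
  let ?T = "Sof ` {g. adm g}"
  show "\<forall>S\<in>?T. unimodular_in (aff_lattice V) S" using unimod by auto
  show "regular_triangulation V ?T" unfolding regular_triangulation_def
  proof (intro conjI)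
    show "finite ?T" by (rule finite_subset[where B="Pow V"]) (use S_sub finV in auto)
    show "\<forall>S\<in>?T. S \<subseteq> V \<and> \<not> affine_dependent S \<and> aff_dim (convex hull S) = aff_dim (convex hull V)"
    proof
      fix S assume "S \<in> ?T"
      then obtain g where g: "adm g" "S = Sof g" by blast
      have "aff_dim (convex hull S) = aff_dim (affine hull S)" by (simp add: aff_dim_convex_hull aff_dim_affine_hull)
      also have "\<dots> = aff_dim (affine hull V)" using aff_eq[OF g(1)] g(2) by simp
      also have "\<dots> = aff_dim (convex hull V)" by (simp add: aff_dim_convex_hull aff_dim_affine_hull)
      finally show "S \<subseteq> V \<and> \<not> affine_dependent S \<and> aff_dim (convex hull S) = aff_dim (convex hull V)"
        using S_sub affindep[OF g(1)] g(2) by simp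
    qed
    show "\<Union>((\<lambda>S. convex hull S) ` ?T) = convex hull V"
    proof
      show "\<Union>((\<lambda>S. convex hull S) ` ?T) \<subseteq> convex hull V" using hull_mono[OF S_sub] by blast
      show "convex hull V \<subseteq> \<Union>((\<lambda>S. convex hull S) ` ?T)" using cover by blast
    qed
    show "\<forall>S\<in>?T. \<forall>S'\<in>?T. convex hull S \<inter> convex hull S' = convex hull (S \<inter> S')"
      using inter by blast
    show "\<exists>\<omega>. \<forall>S\<in>?T. \<exists>a b. (\<forall>v\<in>S. a \<bullet> v + b = \<omega> v) \<and> (\<forall>v\<in>V - S. a \<bullet> v + b < \<omega> v)"
      using regular by blast
  qed
qed

end



definition rotk :: "nat \<Rightarrow> int \<Rightarrow> nat \<Rightarrow> nat" where
  "rotk n k i = (if 1 \<le> i \<and> i \<le> n then nat ((int i - 1 + k) mod int n) + 1 else i)"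
definition reflm :: "nat \<Rightarrow> int \<Rightarrow> nat \<Rightarrow> nat" where
  "reflm n m i = (if 1 \<le> i \<and> i \<le> n then nat ((m - int i - 1) mod int n) + 1 else i)"

lemma mod_char: assumes "0 < n" "0 \<le> r" "r < n" shows "(x::int) mod n = r \<longleftrightarrow> n dvd (x - r)"
proof -
  have "r mod n = r" using assms by simp
  then show ?thesis using mod_eq_dvd_iff[of x n r] by simp
qed

lemma nat_mod_lt: assumes "0 < n" shows "nat (x mod int n) < n"
proof -
  have "x mod int n < int n" using assms by simp
  moreover have "0 \<le> x mod int n" using assms by simp
  ultimately show ?thesis by linarith
qed

lemma rotk_range: "0 < n \<Longrightarrow> i \<in> {1..n} \<Longrightarrow> rotk n k i \<in> {1..n}"
  unfolding rotk_def using nat_mod_lt[of n "int i - 1 + k"] by auto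
  
lemma reflm_range: "0 < n \<Longrightarrow> i \<in> {1..n} \<Longrightarrow> reflm n m i \<in> {1..n}"
  unfolding reflm_def using nat_mod_lt[of n "m - int i - 1"] by auto

lemma rotk_out: "i \<notin> {1..n} \<Longrightarrow> rotk n k i = i" unfolding rotk_def by auto
lemma reflm_out: "i \<notin> {1..n} \<Longrightarrow> reflm n m i = i" unfolding reflm_def by auto

lemma rotk_iff: assumes "0 < n" "i \<in> {1..n}" "j \<in> {1..n}"
  shows "rotk n k i = j \<longleftrightarrow> int n dvd (int j - int i - k)"
proof -
  have "rotk n k i = j \<longleftrightarrow> (int i - 1 + k) mod int n = int j - 1"
    using assms unfolding rotk_def by auto
  also have "\<dots> \<longleftrightarrow> int n dvd ((int i - 1 + k) - (int j - 1))"
    using assms by (intro mod_char) auto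
  also have "\<dots> \<longleftrightarrow> int n dvd (int j - int i - k)"
  proof -
    have "(int i - 1 + k) - (int j - 1) = - (int j - int i - k)" by simp
    then show ?thesis by (metis dvd_minus_iff)
  qed
  finally show ?thesis .
qed

lemma reflm_iff: assumes "0 < n" "i \<in> {1..n}" "j \<in> {1..n}"
  shows "reflm n m i = j \<longleftrightarrow> int n dvd (int i + int j - m)"
proof -
  have "reflm n m i = j \<longleftrightarrow> (m - int i - 1) mod int n = int j - 1"
    using assms unfolding reflm_def by auto
  also have "\<dots> \<longleftrightarrow> int n dvd ((m - int i - 1) - (int j - 1))"
    using assms by (intro mod_char) auto
  also have "\<dots> \<longleftrightarrow> int n dvd (int i + int j - m)"
  proof -
    have "(m - int i - 1) - (int j - 1) = - (int i + int j - m)" by simp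
    then show ?thesis by (metis dvd_minus_iff)
  qed
  finally show ?thesis .
qed


lemma dvd_comb: "(n::int) dvd x \<Longrightarrow> n dvd y \<Longrightarrow> z = x + y \<Longrightarrow> n dvd z"
  by simp
lemma dvd_comb2: "(n::int) dvd x \<Longrightarrow> n dvd y \<Longrightarrow> z = x - y \<Longrightarrow> n dvd z"
  by simp

lemma rot_rot: assumes n: "0 < n" shows "rotk n a \<circ> rotk n b = rotk n (a + b)"
proof (rule ext)
  fix i show "(rotk n a \<circ> rotk n b) i = rotk n (a + b) i"
  proof (cases "i \<in> {1..n}")
    case False then show ?thesis by (simp add: rotk_out)
  next
    case True
    define j where "j = rotk n b i"
    define l where "l = rotk n a j"
    have jr: "j \<in> {1..n}" using rotk_range[OF n True] j_def by simp
    have lr: "l \<in> {1..n}" using rotk_range[OF n jr] l_def by simp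
    have d1: "int n dvd (int j - int i - b)" using rotk_iff[OF n True jr, where k=b] j_def by simp
    have d2: "int n dvd (int l - int j - a)" using rotk_iff[OF n jr lr, where k=a] l_def by simp
    have "int n dvd (int l - int i - (a + b))" by (rule dvd_comb[OF d2 d1]) simp
    then have "rotk n (a + b) i = l" using rotk_iff[OF n True lr, where k="a+b"] by simp
    then show ?thesis using j_def l_def by simp
  qed
qed

lemma rot_refl: assumes n: "0 < n" shows "rotk n a \<circ> reflm n m = reflm n (m + a)"
proof (rule ext)
  fix i show "(rotk n a \<circ> reflm n m) i = reflm n (m + a) i"
  proof (cases "i \<in> {1..n}")
    case False then show ?thesis by (simp add: rotk_out reflm_out)
  next
    case True
    define j where "j = reflm n m i"
    define l where "l = rotk n a j"
    have jr: "j \<in> {1..n}" using reflm_range[OF n True] j_def by simp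
    have lr: "l \<in> {1..n}" using rotk_range[OF n jr] l_def by simp
    have d1: "int n dvd (int i + int j - m)" using reflm_iff[OF n True jr, where m=m] j_def by simp
    have d2: "int n dvd (int l - int j - a)" using rotk_iff[OF n jr lr, where k=a] l_def by simp
    have "int n dvd (int i + int l - (m + a))" by (rule dvd_comb[OF d1 d2]) simp
    then have "reflm n (m + a) i = l" using reflm_iff[OF n True lr, where m="m+a"] by simp
    then show ?thesis using j_def l_def by simp
  qed
qed

lemma refl_rot: assumes n: "0 < n" shows "reflm n p \<circ> rotk n k = reflm n (p - k)"
proof (rule ext)
  fix i show "(reflm n p \<circ> rotk n k) i = reflm n (p - k) i"
  proof (cases "i \<in> {1..n}")
    case False then show ?thesis by (simp add: rotk_out reflm_out)
  next
    case True
    define j where "j = rotk n k i"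
    define l where "l = reflm n p j"
    have jr: "j \<in> {1..n}" using rotk_range[OF n True] j_def by simp
    have lr: "l \<in> {1..n}" using reflm_range[OF n jr] l_def by simp
    have d1: "int n dvd (int j - int i - k)" using rotk_iff[OF n True jr, where k=k] j_def by simp
    have d2: "int n dvd (int j + int l - p)" using reflm_iff[OF n jr lr, where m=p] l_def by simp
    have "int n dvd (int i + int l - (p - k))" by (rule dvd_comb2[OF d2 d1]) simp
    then have "reflm n (p - k) i = l" using reflm_iff[OF n True lr, where m="p-k"] by simp
    then show ?thesis using j_def l_def by simp
  qed
qed

lemma refl_refl: assumes n: "0 < n" shows "reflm n p \<circ> reflm n m = rotk n (p - m)"
proof (rule ext)
  fix i show "(reflm n p \<circ> reflm n m) i = rotk n (p - m) i"
  proof (cases "i \<in> {1..n}")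
    case False then show ?thesis by (simp add: rotk_out reflm_out)
  next
    case True
    define j where "j = reflm n m i"
    define l where "l = reflm n p j"
    have jr: "j \<in> {1..n}" using reflm_range[OF n True] j_def by simp
    have lr: "l \<in> {1..n}" using reflm_range[OF n jr] l_def by simp
    have d1: "int n dvd (int i + int j - m)" using reflm_iff[OF n True jr, where m=m] j_def by simp
    have d2: "int n dvd (int j + int l - p)" using reflm_iff[OF n jr lr, where m=p] l_def by simp
    have "int n dvd (int l - int i - (p - m))" by (rule dvd_comb2[OF d2 d1]) simp
    then have "rotk n (p - m) i = l" using rotk_iff[OF n True lr, where k="p-m"] by simp
    then show ?thesis using j_def l_def by simp
  qed
qed

lemma rot_mod: "rotk n (k mod int n) = rotk n k"
  unfolding rotk_def by (rule ext) (simp add: mod_add_right_eq)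

lemma refl_mod: "reflm n (m mod int n) = reflm n m"
proof (rule ext)
  fix i
  have "(m mod int n - int i - 1) mod int n = (m - int i - 1) mod int n"
    by (metis mod_diff_left_eq)
  then show "reflm n (m mod int n) i = reflm n m i" unfolding reflm_def by simp
qed

lemma rot0: assumes "0 < n" shows "rotk n 0 = id"
proof (rule ext)
  fix i show "rotk n 0 i = id i"
  proof (cases "i \<in> {1..n}")
    case True
    then have "(int i - 1) mod int n = int i - 1" by simp
    moreover have "nat (int i - 1) + 1 = i" using True by auto
    ultimately show ?thesis using True unfolding rotk_def by simp
  qed (simp add: rotk_out)
qed

lemma dnrot: assumes "0 < n" shows "dn_rot n = rotk n 1"
proof (rule ext)
  fix i show "dn_rot n i = rotk n 1 i"
  proof (cases "i \<in> {1..n}")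
    case True
    show ?thesis
    proof (cases "i = n")
      case True then show ?thesis unfolding rotk_def dn_rot_def using assms by simp
    next
      case False
      then have "int i mod int n = int i" using True by simp
      then show ?thesis unfolding rotk_def dn_rot_def using True False by simp
    qed
  qed (use assms in \<open>auto simp: rotk_out dn_rot_def\<close>)
qed

lemma dnflip: assumes "0 < n" shows "dn_flip n = reflm n 1"
proof (rule ext)
  fix i show "dn_flip n i = reflm n 1 i"
  proof (cases "i \<in> {1..n}")
    case True
    have r: "reflm n 1 i \<in> {1..n}" using reflm_range[OF assms True] .
    have "int n dvd (int i + int (n + 1 - i) - 1)" using True by (simp add: of_nat_diff)
    moreover have rr: "n + 1 - i \<in> {1..n}" using True by auto
    ultimately have "reflm n 1 i = n + 1 - i" using reflm_iff[OF assms True rr, where m=1] by simp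
    then show ?thesis unfolding dn_flip_def using True by simp
  qed (auto simp: reflm_out dn_flip_def)
qed


lemma dih_sub: assumes n: "0 < n" shows "g \<in> dihedral n \<Longrightarrow> g \<in> range (rotk n) \<union> range (reflm n)"
proof (induction rule: dihedral.induct)
  case dihedral_id then show ?case using rot0[OF n] by (metis UnI1 rangeI)
next
  case (dihedral_rot g)
  from dihedral_rot.IH show ?case
  proof
    assume "g \<in> range (rotk n)"
    then obtain k where "g = rotk n k" by blast
    then have "dn_rot n \<circ> g = rotk n (1 + k)" using dnrot[OF n] rot_rot[OF n] by simp
    then show ?case by blast
  next
    assume "g \<in> range (reflm n)"
    then obtain k where "g = reflm n k" by blast
    then have "dn_rot n \<circ> g = reflm n (k + 1)" using dnrot[OF n] rot_refl[OF n] by simp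
    then show ?case by blast
  qed
next
  case (dihedral_flip g)
  from dihedral_flip.IH show ?case
  proof
    assume "g \<in> range (rotk n)"
    then obtain k where "g = rotk n k" by blast
    then have "dn_flip n \<circ> g = reflm n (1 - k)" using dnflip[OF n] refl_rot[OF n] by simp
    then show ?case by blast
  next
    assume "g \<in> range (reflm n)"
    then obtain k where "g = reflm n k" by blast
    then have "dn_flip n \<circ> g = rotk n (1 - k)" using dnflip[OF n] refl_refl[OF n] by simp
    then show ?case by blast
  qed
qed

lemma rot_in: assumes n: "0 < n" shows "rotk n (int k) \<in> dihedral n"
proof (induction k)
  case 0
  have e: "rotk n (int 0) = id" using rot0[OF n] by simp
  show ?case unfolding e by (rule dihedral_id)
next
  case (Suc k)
  have e: "rotk n (int (Suc k)) = dn_rot n \<circ> rotk n (int k)"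
    using dnrot[OF n] rot_rot[OF n, of 1 "int k"] by (simp add: add.commute)
  show ?case unfolding e by (rule dihedral_rot[OF Suc.IH])
qed

lemma refl_in: assumes n: "0 < n" shows "reflm n (1 + int k) \<in> dihedral n"
proof (induction k)
  case 0
  have e: "reflm n (1 + int 0) = dn_flip n \<circ> id" using dnflip[OF n] by simp
  show ?case unfolding e by (rule dihedral_flip[OF dihedral_id])
next
  case (Suc k)
  have e: "reflm n (1 + int (Suc k)) = dn_rot n \<circ> reflm n (1 + int k)"
    using dnrot[OF n] rot_refl[OF n, of 1 "1 + int k"] by (simp add: add.commute)
  show ?case unfolding e by (rule dihedral_rot[OF Suc.IH])
qed

lemma dih_eq: assumes n: "0 < n" shows "dihedral n = rotk n ` {0..<int n} \<union> reflm n ` {0..<int n}"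
proof
  show "dihedral n \<subseteq> rotk n ` {0..<int n} \<union> reflm n ` {0..<int n}"
  proof
    fix g assume "g \<in> dihedral n"
    then have "g \<in> range (rotk n) \<union> range (reflm n)" using dih_sub[OF n] by blast
    then show "g \<in> rotk n ` {0..<int n} \<union> reflm n ` {0..<int n}"
    proof
      assume "g \<in> range (rotk n)"
      then obtain k where k: "g = rotk n k" by blast
      have "k mod int n \<in> {0..<int n}" using n by simp
      then show ?thesis using k rot_mod[of n k] by (metis UnI1 imageI)
    next
      assume "g \<in> range (reflm n)"
      then obtain k where k: "g = reflm n k" by blast
      have "k mod int n \<in> {0..<int n}" using n by simp
      then show ?thesis using k refl_mod[of n k] by (metis UnI2 imageI)
    qed
  qed
  show "rotk n ` {0..<int n} \<union> reflm n ` {0..<int n} \<subseteq> dihedral n"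
  proof
    fix g assume "g \<in> rotk n ` {0..<int n} \<union> reflm n ` {0..<int n}"
    then show "g \<in> dihedral n"
    proof
      assume "g \<in> rotk n ` {0..<int n}"
      then obtain k where k: "g = rotk n k" "0 \<le> k" by auto
      have "rotk n (int (nat k)) \<in> dihedral n" by (rule rot_in[OF n])
      then show ?thesis using k by simp
    next
      assume "g \<in> reflm n ` {0..<int n}"
      then obtain m where m: "g = reflm n m" "0 \<le> m" by auto
      have "reflm n (1 + int (nat (m - 1 + int n))) = reflm n (m + int n)" using m(2) n by simp
      also have "\<dots> = reflm n m" using refl_mod[of n "m + int n"] refl_mod[of n m] by simp
      finally show ?thesis using refl_in[OF n, of "nat (m - 1 + int n)"] m(1) by simp
    qed
  qed
qed




locale dcon =
  fixes e :: "nat \<Rightarrow> 'n::finite"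
  assumes bij: "bij_betw e {1..CARD('n)} (UNIV :: 'n set)" and big: "CARD('n) > 2"
begin


lemma npos: "0 < CARD('n)" using big by simp

lemma inv_e: "i \<in> {1..CARD('n)} \<Longrightarrow> inv_into {1..CARD('n)} e (e i) = i"
  using bij_betw_imp_inj_on[OF bij] by (simp add: inv_into_f_f)

lemma surj_e: "\<exists>i\<in>{1..CARD('n)}. a = e i"
  using bij_betw_imp_surj_on[OF bij] by (metis UNIV_I imageE)

lemma entry: assumes "i \<in> {1..CARD('n)}" "j \<in> {1..CARD('n)}" shows "perm_mat e g $ e i $ e j = (if g i = j then 1 else 0)"
proof -
  have a: "inv_into {1..CARD('n)} e (e i) = i" using inv_e assms(1) .
  have b: "inv_into {1..CARD('n)} e (e j) = j" using inv_e assms(2) .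
  show ?thesis unfolding perm_mat_def vec_lambda_beta a b by (rule refl)
qed

definition R where "R k = perm_mat e (rotk CARD('n) k)"
definition F where "F m = perm_mat e (reflm CARD('n) m)"
definition K where "K = {0..<int CARD('n)}"

lemma one_in: "1 \<in> {1..CARD('n)}" and two_in: "2 \<in> {1..CARD('n)}" using big by auto

lemma modK: "k \<in> K \<Longrightarrow> k mod int CARD('n) = k" unfolding K_def by simp

lemma Kdvd: assumes "k \<in> K" "k' \<in> K" "int CARD('n) dvd (k - k')" shows "k = k'"
proof -
  have "k mod int CARD('n) = k' mod int CARD('n)" using assms(3) mod_eq_dvd_iff by blast
  then show ?thesis using modK assms by simp
qed

lemma R_inj: assumes "k \<in> K" "k' \<in> K" "R k = R k'" shows "k = k'"
proof -
  define j where "j = rotk CARD('n) k 1"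
  have jr: "j \<in> {1..CARD('n)}" using rotk_range[OF npos one_in] j_def by simp
  have "R k $ e 1 $ e j = 1" using entry[OF one_in jr] j_def R_def by simp
  then have "R k' $ e 1 $ e j = 1" using assms(3) by simp
  then have "rotk CARD('n) k' 1 = j" using entry[OF one_in jr] R_def by (simp split: if_splits)
  then have d1: "int CARD('n) dvd (int j - 1 - k')" using rotk_iff[OF npos one_in jr] by simp
  have d2: "int CARD('n) dvd (int j - 1 - k)" using rotk_iff[OF npos one_in jr, where k=k] j_def by simp
  have "int CARD('n) dvd (k - k')" by (rule dvd_comb2[OF d1 d2]) simp
  then show ?thesis using Kdvd assms by blast
qed

lemma F_inj: assumes "k \<in> K" "k' \<in> K" "F k = F k'" shows "k = k'"
proof -
  define j where "j = reflm CARD('n) k 1"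
  have jr: "j \<in> {1..CARD('n)}" using reflm_range[OF npos one_in] j_def by simp
  have "F k $ e 1 $ e j = 1" using entry[OF one_in jr] j_def F_def by simp
  then have "F k' $ e 1 $ e j = 1" using assms(3) by simp
  then have "reflm CARD('n) k' 1 = j" using entry[OF one_in jr] F_def by (simp split: if_splits)
  then have d1: "int CARD('n) dvd (1 + int j - k')" using reflm_iff[OF npos one_in jr] by simp
  have d2: "int CARD('n) dvd (1 + int j - k)" using reflm_iff[OF npos one_in jr, where m=k] j_def by simp
  have "int CARD('n) dvd (k - k')" by (rule dvd_comb2[OF d1 d2]) simp
  then show ?thesis using Kdvd assms by blast
qed

lemma RF: "R k \<noteq> F m"
proof
  assume eq: "R k = F m"
  define j1 where "j1 = rotk CARD('n) k 1"
  define j2 where "j2 = rotk CARD('n) k 2"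
  have j1r: "j1 \<in> {1..CARD('n)}" using rotk_range[OF npos one_in] j1_def by simp
  have j2r: "j2 \<in> {1..CARD('n)}" using rotk_range[OF npos two_in] j2_def by simp
  have "R k $ e 1 $ e j1 = 1" using entry[OF one_in j1r, of "rotk CARD('n) k"] j1_def R_def by simp
  then have "F m $ e 1 $ e j1 = 1" using eq by simp
  then have "reflm CARD('n) m 1 = j1" using entry[OF one_in j1r] F_def by (simp split: if_splits)
  then have a1: "int CARD('n) dvd (1 + int j1 - m)" using reflm_iff[OF npos one_in j1r] by simp
  have "R k $ e 2 $ e j2 = 1" using entry[OF two_in j2r, of "rotk CARD('n) k"] j2_def R_def by simp
  then have "F m $ e 2 $ e j2 = 1" using eq by simp
  then have "reflm CARD('n) m 2 = j2" using entry[OF two_in j2r] F_def by (simp split: if_splits)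
  then have a2: "int CARD('n) dvd (2 + int j2 - m)" using reflm_iff[OF npos two_in j2r] by simp
  have b1: "int CARD('n) dvd (int j1 - 1 - k)" using rotk_iff[OF npos one_in j1r, where k=k] j1_def by simp
  have b2: "int CARD('n) dvd (int j2 - 2 - k)" using rotk_iff[OF npos two_in j2r, where k=k] j2_def by simp
  have c1: "int CARD('n) dvd (2 + k - m)" by (rule dvd_comb2[OF a1 b1]) simp
  have c2: "int CARD('n) dvd (4 + k - m)" by (rule dvd_comb2[OF a2 b2]) simp
  have "int CARD('n) dvd 2" by (rule dvd_comb2[OF c2 c1]) simp
  then have "int CARD('n) \<le> 2" by (rule zdvd_imp_le) simp
  then show False using big by simp
qed

lemma V_eq: "dn_vertices e = R ` K \<union> F ` K"
  unfolding dn_vertices_def dih_eq[OF npos] image_Un image_image R_def F_def K_def by simp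

lemma rot_sel: assumes "X \<subseteq> K" "i \<in> {1..CARD('n)}" "j \<in> {1..CARD('n)}"
  shows "(\<Sum>k\<in>X. f k * (if rotk CARD('n) k i = j then 1 else 0)) = (if (int j - int i) mod int CARD('n) \<in> X then f ((int j - int i) mod int CARD('n)) else (0::real))"
proof -
  have fin: "finite X" using assms(1) finite_subset K_def by auto
  have "(\<Sum>k\<in>X. f k * (if rotk CARD('n) k i = j then 1 else 0)) = (\<Sum>k\<in>X. if k = (int j - int i) mod int CARD('n) then f k else 0)"
  proof (rule sum.cong)
    fix k assume k: "k \<in> X"
    then have kK: "0 \<le> k" "k < int CARD('n)" using assms(1) K_def by auto
    have "rotk CARD('n) k i = j \<longleftrightarrow> int CARD('n) dvd (int j - int i - k)" using rotk_iff[OF npos assms(2,3)] .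
    also have "\<dots> \<longleftrightarrow> (int j - int i) mod int CARD('n) = k" using mod_char[OF _ kK] npos by simp
    finally show "f k * (if rotk CARD('n) k i = j then 1 else 0) = (if k = (int j - int i) mod int CARD('n) then f k else 0)"
      by auto
  qed simp
  also have "\<dots> = (if (int j - int i) mod int CARD('n) \<in> X then f ((int j - int i) mod int CARD('n)) else 0)"
    using fin by (simp add: sum.delta')
  finally show ?thesis .
qed

lemma refl_sel: assumes "X \<subseteq> K" "i \<in> {1..CARD('n)}" "j \<in> {1..CARD('n)}"
  shows "(\<Sum>k\<in>X. f k * (if reflm CARD('n) k i = j then 1 else 0)) = (if (int i + int j) mod int CARD('n) \<in> X then f ((int i + int j) mod int CARD('n)) else (0::real))"
proof -
  have fin: "finite X" using assms(1) finite_subset K_def by auto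
  have "(\<Sum>k\<in>X. f k * (if reflm CARD('n) k i = j then 1 else 0)) = (\<Sum>k\<in>X. if k = (int i + int j) mod int CARD('n) then f k else 0)"
  proof (rule sum.cong)
    fix k assume k: "k \<in> X"
    then have kK: "0 \<le> k" "k < int CARD('n)" using assms(1) K_def by auto
    have "reflm CARD('n) k i = j \<longleftrightarrow> int CARD('n) dvd (int i + int j - k)" using reflm_iff[OF npos assms(2,3)] .
    also have "\<dots> \<longleftrightarrow> (int i + int j) mod int CARD('n) = k" using mod_char[OF _ kK] npos by simp
    finally show "f k * (if reflm CARD('n) k i = j then 1 else 0) = (if k = (int i + int j) mod int CARD('n) then f k else 0)"
      by auto
  qed simp
  also have "\<dots> = (if (int i + int j) mod int CARD('n) \<in> X then f ((int i + int j) mod int CARD('n)) else 0)"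
    using fin by (simp add: sum.delta')
  finally show ?thesis .
qed


definition p :: int where "p = (if even CARD('n) then 2 else 1)"
definition Ks where "Ks s = {k \<in> K. k mod p = s}"
definition AA where "AA s = R ` Ks s"
definition BB where "BB s = F ` Ks s"
definition II where "II = {0..<p}"

lemma p_pos: "0 < p" and p_le: "p \<le> 2" unfolding p_def by auto
lemma p_dvd: "p dvd int CARD('n)" unfolding p_def by auto
lemma p_dvd2: "p dvd 2 * x" unfolding p_def by auto

lemma finK: "finite K" unfolding K_def by simp
lemma Ks_sub: "Ks s \<subseteq> K" unfolding Ks_def by auto

lemma sum_entry: "(\<Sum>v\<in>X. v) $ a $ b = (\<Sum>v\<in>X. v $ a $ b)"
  by (simp add: sum_component)

lemma R_inj_on: "inj_on R X" if "X \<subseteq> K" using R_inj that by (meson inj_onI subsetD)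
lemma F_inj_on: "inj_on F X" if "X \<subseteq> K" using F_inj that by (meson inj_onI subsetD)

lemma sumAB: assumes "s \<in> II" shows "(\<Sum>v\<in>AA s. v) = (\<Sum>v\<in>BB s. v)"
proof -
  have "(\<Sum>v\<in>AA s. v) $ e i $ e j = (\<Sum>v\<in>BB s. v) $ e i $ e j" if ij: "i \<in> {1..CARD('n)}" "j \<in> {1..CARD('n)}" for i j
  proof -
    have "(\<Sum>v\<in>AA s. v) $ e i $ e j = (\<Sum>k\<in>Ks s. R k $ e i $ e j)"
      unfolding sum_entry AA_def by (simp add: sum.reindex[OF R_inj_on[OF Ks_sub]])
    also have "\<dots> = (\<Sum>k\<in>Ks s. 1 * (if rotk CARD('n) k i = j then 1 else 0))"
      unfolding R_def using entry[OF ij] by simp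
    also have "\<dots> = (if (int j - int i) mod int CARD('n) \<in> Ks s then 1 else 0)"
      using rot_sel[OF Ks_sub ij, where f="\<lambda>_. 1"] by simp
    also have "\<dots> = (if (int j - int i) mod int CARD('n) mod p = s then 1 else 0)"
      unfolding Ks_def K_def using npos by simp
    also have "(int j - int i) mod int CARD('n) mod p = (int i + int j) mod int CARD('n) mod p"
    proof -
      have "(int j - int i) mod p = (int i + int j) mod p"
        using p_dvd2[of "int i"] mod_eq_dvd_iff[of "int j - int i" p "int i + int j"]
        by (metis add_diff_cancel_left' diff_add_eq diff_diff_eq2 dvd_minus_iff minus_diff_eq mult_2 add.commute)
      then show ?thesis using mod_mod_cancel[OF p_dvd] by simp
    qed
    also have "(if (int i + int j) mod int CARD('n) mod p = s then 1 else 0) = (if (int i + int j) mod int CARD('n) \<in> Ks s then 1 else (0::real))"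
      unfolding Ks_def K_def using npos by simp
    also have "\<dots> = (\<Sum>k\<in>Ks s. 1 * (if reflm CARD('n) k i = j then 1 else 0))"
      using refl_sel[OF Ks_sub ij, where f="\<lambda>_. 1"] by simp
    also have "\<dots> = (\<Sum>k\<in>Ks s. F k $ e i $ e j)"
      unfolding F_def using entry[OF ij] by simp
    also have "\<dots> = (\<Sum>v\<in>BB s. v) $ e i $ e j"
      unfolding sum_entry BB_def by (simp add: sum.reindex[OF F_inj_on[OF Ks_sub]])
    finally show ?thesis .
  qed
  then show ?thesis unfolding vec_eq_iff by (metis surj_e)
qed


lemma rel: assumes "(\<Sum>v\<in>R`K \<union> F`K. c v *\<^sub>R v) = 0" "s \<in> II" "a \<in> AA s" "b \<in> BB s"
  shows "c b = - c a"
proof -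
  obtain k where k: "k \<in> Ks s" "a = R k" using assms(3) AA_def by auto
  obtain m where m: "m \<in> Ks s" "b = F m" using assms(4) BB_def by auto
  have kK: "k \<in> K" "m \<in> K" using k m Ks_sub by auto
  have "m mod p = k mod p" using k m Ks_def by simp
  then have pd: "p dvd (m - k)" using mod_eq_dvd_iff by blast
  define d where "d = m - k"
  define t where "t = (if even d then d div 2 else (d + int CARD('n)) div 2)"
  have td: "int CARD('n) dvd (2 * t - d)"
  proof (cases "even d")
    case True then have "2 * t = d" using t_def by simp
    then show ?thesis by simp
  next
    case False
    have "\<not> even CARD('n)"
    proof
      assume "even CARD('n)"
      then have "p = 2" unfolding p_def by simp
      then show False using pd False d_def by simp
    qed
    then have "even (d + int CARD('n))" using False by simp
    then have "2 * t = d + int CARD('n)" using t_def False by simp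
    then show ?thesis by simp
  qed
  define i where "i = nat ((t - 1) mod int CARD('n)) + 1"
  have ir: "i \<in> {1..CARD('n)}" using nat_mod_lt[OF npos, of "t - 1"] i_def by auto
  have ii: "int i = (t - 1) mod int CARD('n) + 1" using i_def npos by simp
  have "int CARD('n) dvd ((t - 1) - (t - 1) mod int CARD('n))"
    using mod_char[of "int CARD('n)" "(t - 1) mod int CARD('n)" "t - 1"] npos by simp
  then have it: "int CARD('n) dvd (int i - t)"
    using ii by (metis dvd_minus_iff minus_diff_eq diff_diff_eq2 diff_add_eq add.commute diff_diff_eq)
  define j where "j = rotk CARD('n) k i"
  have jr: "j \<in> {1..CARD('n)}" using rotk_range[OF npos ir] j_def by simp
  have rj: "int CARD('n) dvd (int j - int i - k)" using rotk_iff[OF npos ir jr, where k=k] j_def by simp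
  have "int CARD('n) dvd ((int j - int i - k) + 2 * (int i - t) + (2 * t - d))"
    by (intro dvd_add rj td dvd_mult it)
  moreover have "(int j - int i - k) + 2 * (int i - t) + (2 * t - d) = int i + int j - m"
    unfolding d_def by simp
  ultimately have fj: "int CARD('n) dvd (int i + int j - m)" by metis
  have kk: "(int j - int i) mod int CARD('n) = k"
    using mod_char[of "int CARD('n)" k "int j - int i"] npos kK(1) rj unfolding K_def by simp
  have mm: "(int i + int j) mod int CARD('n) = m"
    using mod_char[of "int CARD('n)" m "int i + int j"] npos kK(2) fj unfolding K_def by simp
  have dis: "R ` K \<inter> F ` K = {}" using RF by blast
  have "0 = (\<Sum>v\<in>R`K \<union> F`K. c v *\<^sub>R v) $ e i $ e j" using assms(1) by simp
  also have "\<dots> = (\<Sum>v\<in>R`K. c v * v $ e i $ e j) + (\<Sum>v\<in>F`K. c v * v $ e i $ e j)"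
    by (simp add: sum_component sum.union_disjoint[OF _ _ dis] finK)
  also have "(\<Sum>v\<in>R`K. c v * v $ e i $ e j) = (\<Sum>k'\<in>K. c (R k') * (if rotk CARD('n) k' i = j then 1 else 0))"
    by (simp add: sum.reindex[OF R_inj_on[OF order_refl]]) (simp add: R_def entry[OF ir jr])
  also have "\<dots> = c (R k)"
    using rot_sel[OF order_refl ir jr, where f="\<lambda>k'. c (R k')"] kk kK by simp
  also have "(\<Sum>v\<in>F`K. c v * v $ e i $ e j) = (\<Sum>k'\<in>K. c (F k') * (if reflm CARD('n) k' i = j then 1 else 0))"
    by (simp add: sum.reindex[OF F_inj_on[OF order_refl]]) (simp add: F_def entry[OF ir jr])
  also have "\<dots> = c (F m)"
    using refl_sel[OF order_refl ir jr, where f="\<lambda>k'. c (F k')"] mm kK by simp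
  finally show ?thesis using k m by simp
qed

lemma inst: "dsetup (R`K \<union> F`K) II AA BB"
proof
  show "finite (R ` K \<union> F ` K)" using finK by simp
  show "finite II" unfolding II_def by simp
  show "II \<noteq> {}" unfolding II_def using p_pos by simp
  show "R ` K \<union> F ` K = (\<Union>i\<in>II. AA i \<union> BB i)"
  proof
    show "(\<Union>i\<in>II. AA i \<union> BB i) \<subseteq> R ` K \<union> F ` K" unfolding AA_def BB_def using Ks_sub by blast
    have "k \<in> Ks (k mod p)" "k mod p \<in> II" if "k \<in> K" for k
      using that p_pos unfolding Ks_def II_def by auto
    then show "R ` K \<union> F ` K \<subseteq> (\<Union>i\<in>II. AA i \<union> BB i)" unfolding AA_def BB_def by blast
  qed
  show "AA i \<inter> BB j = {}" for i j unfolding AA_def BB_def using RF by blast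
  show "AA i \<inter> AA j = {}" if "i \<noteq> j" for i j
    unfolding AA_def using R_inj Ks_sub that unfolding Ks_def by blast
  show "BB i \<inter> BB j = {}" if "i \<noteq> j" for i j
    unfolding BB_def using F_inj Ks_sub that unfolding Ks_def by blast
  show "card (AA i) = card (BB i)" for i
    unfolding AA_def BB_def using card_image[OF R_inj_on[OF Ks_sub]] card_image[OF F_inj_on[OF Ks_sub]] by simp
  show "AA i \<noteq> {}" if "i \<in> II" for i
  proof -
    have "i \<in> Ks i" using that p_le big unfolding II_def Ks_def K_def by auto
    then show ?thesis unfolding AA_def by blast
  qed
  show "(\<Sum>v\<in>AA i. v) = (\<Sum>v\<in>BB i. v)" if "i \<in> II" for i using sumAB that .
  show "c b = - c a" if "(\<Sum>v\<in>R ` K \<union> F ` K. c v *\<^sub>R v) = 0" "i \<in> II" "a \<in> AA i" "b \<in> BB i" for c i a b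
    using rel that by blast
qed

theorem result: "\<exists>T. regular_triangulation (dn_vertices e) T \<and> (\<forall>S\<in>T. unimodular_in (aff_lattice (dn_vertices e)) S)"
  unfolding V_eq using dsetup.main[OF inst] .

end

theorem proposition3:
  fixes e :: "nat \<Rightarrow> 'n::finite"
  assumes "bij_betw e {1..CARD('n)} (UNIV :: 'n set)"
    and "CARD('n) > 2"
  shows "\<exists>T. regular_triangulation (dn_vertices e) T \<and>
             (\<forall>S\<in>T. unimodular_in (aff_lattice (dn_vertices e)) S)"
proof -
  interpret dcon e using assms by unfold_locales
  show ?thesis by (rule result)
qed

end
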